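(* For any pair of objects $A$ and $B$ in $\mathrm{ob}\,\mathcal{A}$, the map \[ \mathrm{d}_{f_\alpha}(A,B)=\inf\Big\{f_\alpha(\mathbf{c}) \mid \mathbf{c}\colon A\xleftrightarrow{\ \varphi\ } C \xleftrightarrow{\ \psi\ } B \Big\}, \] with the convention $\inf\emptyset=\infty$, defines an (extended) pseudometric on $\mathrm{ob}\,\mathcal{A}$.
   Context: Let $\mathcal{A}$ be an abelian category and $\alpha$ an amplitude on $\mathcal{A}$, i.e. a class function $\alpha\colon \mathrm{ob}\,\mathcal{A}\to[0,\infty]$ with $\alpha(0)=0$ such that for every short exact sequence $0\to A\to B\to C\to 0$ in $\mathcal{A}$ one has $\alpha(A)\le\alpha(B)$, $\alpha(C)\le\alpha(B)$ and $\alpha(B)\le\alpha(A)+\alpha(C)$. Let $f\colon[0,\infty]^4\to[0,\infty]$ be a cost function, i.e. $f$ is monotone, subadditive, $f(0)=0$, and $f(x_1,x_2,x_3,x_4)=f(x_3,x_2,x_1,x_4)=f(x_1,x_4,x_3,x_2)$. For a span or cospan $\mathbf{c}\colon A\xleftrightarrow{\ \varphi\ } C \xleftrightarrow{\ \psi\ } B$ in $\mathcal{A}$ (i.e. either $A\xleftarrow{\varphi}C\xrightarrow{\psi}B$ or $A\xrightarrow{\varphi}C\xleftarrow{\psi}B$), its $f$-cost is $f_\alpha(\mathbf{c})=f(\alpha(\ker\varphi),\alpha(\operatorname{coker}\varphi),\alpha(\ker\psi),\alpha(\operatorname{coker}\psi))$. The infimum is taken over all such spans and cospans between $A$ and $B$.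 *)

theory Defs
  imports "HOL-Library.Extended_Nonnegative_Real"
begin

text \<open>Comp g f is g after f (meaningful when Dom g = Cod f).\<close>

record ('o, 'm) abcat =
  Dom  :: "'m \<Rightarrow> 'o"
  Cod  :: "'m \<Rightarrow> 'o"
  Comp :: "'m \<Rightarrow> 'm \<Rightarrow> 'm"
  Ident :: "'o \<Rightarrow> 'm"
  Add  :: "'m \<Rightarrow> 'm \<Rightarrow> 'm"
  Zero :: "'o \<Rightarrow> 'o \<Rightarrow> 'm"

definition hom :: "('o, 'm) abcat \<Rightarrow> 'o \<Rightarrow> 'o \<Rightarrow> 'm set" where
  "hom C a b = {f. Dom C f = a \<and> Cod C f = b}"

definition is_mono :: "('o, 'm) abcat \<Rightarrow> 'm \<Rightarrow> bool" where
  "is_mono C f \<longleftrightarrow> (\<forall>g h. Cod C g = Dom C f \<and> Cod C h = Dom C f \<and> Dom C g = Dom C h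
      \<and> Comp C f g = Comp C f h \<longrightarrow> g = h)"

definition is_epi :: "('o, 'm) abcat \<Rightarrow> 'm \<Rightarrow> bool" where
  "is_epi C f \<longleftrightarrow> (\<forall>g h. Dom C g = Cod C f \<and> Dom C h = Cod C f \<and> Cod C g = Cod C h
      \<and> Comp C g f = Comp C h f \<longrightarrow> g = h)"

definition is_kernel :: "('o, 'm) abcat \<Rightarrow> 'm \<Rightarrow> 'm \<Rightarrow> bool" where
  "is_kernel C k f \<longleftrightarrow> Cod C k = Dom C f \<and> Comp C f k = Zero C (Dom C k) (Cod C f) \<and>
     (\<forall>g. Cod C g = Dom C f \<and> Comp C f g = Zero C (Dom C g) (Cod C f) \<longrightarrow>
        (\<exists>!u. Dom C u = Dom C g \<and> Cod C u = Dom C k \<and> Comp C k u = g))"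

definition is_cokernel :: "('o, 'm) abcat \<Rightarrow> 'm \<Rightarrow> 'm \<Rightarrow> bool" where
  "is_cokernel C q f \<longleftrightarrow> Dom C q = Cod C f \<and> Comp C q f = Zero C (Dom C f) (Cod C q) \<and>
     (\<forall>g. Dom C g = Cod C f \<and> Comp C g f = Zero C (Dom C f) (Cod C g) \<longrightarrow>
        (\<exists>!u. Dom C u = Cod C q \<and> Cod C u = Cod C g \<and> Comp C u q = g))"

definition is_zero_obj :: "('o, 'm) abcat \<Rightarrow> 'o \<Rightarrow> bool" where
  "is_zero_obj C z \<longleftrightarrow> (\<forall>a. (\<exists>!f. f \<in> hom C z a) \<and> (\<exists>!f. f \<in> hom C a z))"

definition abelian_category :: "('o, 'm) abcat \<Rightarrow> bool" where
  "abelian_category C \<longleftrightarrow>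
    \<comment> \<open>category axioms\<close>
    (\<forall>a. Ident C a \<in> hom C a a) \<and>
    (\<forall>f g. Dom C g = Cod C f \<longrightarrow> Comp C g f \<in> hom C (Dom C f) (Cod C g)) \<and>
    (\<forall>f. Comp C (Ident C (Cod C f)) f = f \<and> Comp C f (Ident C (Dom C f)) = f) \<and>
    (\<forall>f g h. Dom C g = Cod C f \<and> Dom C h = Cod C g \<longrightarrow>
        Comp C h (Comp C g f) = Comp C (Comp C h g) f) \<and>
    \<comment> \<open>hom sets are abelian groups\<close>
    (\<forall>a b. Zero C a b \<in> hom C a b) \<and>
    (\<forall>a b. \<forall>f\<in>hom C a b. \<forall>g\<in>hom C a b. Add C f g \<in> hom C a b) \<and>
    (\<forall>a b. \<forall>f\<in>hom C a b. \<forall>g\<in>hom C a b. \<forall>h\<in>hom C a b.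
        Add C (Add C f g) h = Add C f (Add C g h)) \<and>
    (\<forall>a b. \<forall>f\<in>hom C a b. \<forall>g\<in>hom C a b. Add C f g = Add C g f) \<and>
    (\<forall>a b. \<forall>f\<in>hom C a b. Add C (Zero C a b) f = f) \<and>
    (\<forall>a b. \<forall>f\<in>hom C a b. \<exists>g\<in>hom C a b. Add C f g = Zero C a b) \<and>
    \<comment> \<open>composition is bilinear\<close>
    (\<forall>a b c. \<forall>f\<in>hom C a b. \<forall>g\<in>hom C a b. \<forall>h\<in>hom C b c.
        Comp C h (Add C f g) = Add C (Comp C h f) (Comp C h g)) \<and>
    (\<forall>a b c. \<forall>f\<in>hom C b c. \<forall>g\<in>hom C b c. \<forall>h\<in>hom C a b.
        Comp C (Add C f g) h = Add C (Comp C f h) (Comp C g h)) \<and>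
    \<comment> \<open>zero object and binary biproducts\<close>
    (\<exists>z. is_zero_obj C z) \<and>
    (\<forall>a b. \<exists>p i1 i2 p1 p2. i1 \<in> hom C a p \<and> i2 \<in> hom C b p \<and> p1 \<in> hom C p a \<and> p2 \<in> hom C p b \<and>
        Comp C p1 i1 = Ident C a \<and> Comp C p2 i2 = Ident C b \<and>
        Comp C p2 i1 = Zero C a b \<and> Comp C p1 i2 = Zero C b a \<and>
        Add C (Comp C i1 p1) (Comp C i2 p2) = Ident C p) \<and>
    \<comment> \<open>kernels and cokernels exist\<close>
    (\<forall>f. \<exists>k. is_kernel C k f) \<and>
    (\<forall>f. \<exists>q. is_cokernel C q f) \<and>
    \<comment> \<open>every mono is a kernel, every epi is a cokernel\<close>
    (\<forall>m. is_mono C m \<longrightarrow> (\<exists>g. is_kernel C m g)) \<and>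
    (\<forall>e. is_epi C e \<longrightarrow> (\<exists>g. is_cokernel C e g))"

definition short_exact :: "('o, 'm) abcat \<Rightarrow> 'm \<Rightarrow> 'm \<Rightarrow> bool" where
  "short_exact C i p \<longleftrightarrow> is_mono C i \<and> is_epi C p \<and> is_kernel C i p"

definition amplitude :: "('o, 'm) abcat \<Rightarrow> ('o \<Rightarrow> ennreal) \<Rightarrow> bool" where
  "amplitude C \<alpha> \<longleftrightarrow> (\<forall>z. is_zero_obj C z \<longrightarrow> \<alpha> z = 0) \<and>
     (\<forall>i p. short_exact C i p \<longrightarrow>
        \<alpha> (Dom C i) \<le> \<alpha> (Cod C i) \<and> \<alpha> (Cod C p) \<le> \<alpha> (Cod C i) \<and>
        \<alpha> (Cod C i) \<le> \<alpha> (Dom C i) + \<alpha> (Cod C p))"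

definition cost_function :: "(ennreal \<Rightarrow> ennreal \<Rightarrow> ennreal \<Rightarrow> ennreal \<Rightarrow> ennreal) \<Rightarrow> bool" where
  "cost_function f \<longleftrightarrow>
     (\<forall>x1 x2 x3 x4 y1 y2 y3 y4. x1 \<le> y1 \<and> x2 \<le> y2 \<and> x3 \<le> y3 \<and> x4 \<le> y4 \<longrightarrow>
        f x1 x2 x3 x4 \<le> f y1 y2 y3 y4) \<and>
     (\<forall>x1 x2 x3 x4 y1 y2 y3 y4.
        f (x1 + y1) (x2 + y2) (x3 + y3) (x4 + y4) \<le> f x1 x2 x3 x4 + f y1 y2 y3 y4) \<and>
     f 0 0 0 0 = 0 \<and>
     (\<forall>x1 x2 x3 x4. f x1 x2 x3 x4 = f x3 x2 x1 x4 \<and> f x1 x2 x3 x4 = f x1 x4 x3 x2)"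

text \<open>chosen kernel / cokernel objects (the amplitude is isomorphism invariant)\<close>
definition ker_obj :: "('o, 'm) abcat \<Rightarrow> 'm \<Rightarrow> 'o" where
  "ker_obj C f = Dom C (SOME k. is_kernel C k f)"

definition coker_obj :: "('o, 'm) abcat \<Rightarrow> 'm \<Rightarrow> 'o" where
  "coker_obj C f = Cod C (SOME q. is_cokernel C q f)"

definition span_or_cospan :: "('o, 'm) abcat \<Rightarrow> 'o \<Rightarrow> 'o \<Rightarrow> 'm \<Rightarrow> 'm \<Rightarrow> bool" where
  "span_or_cospan C A B \<phi> \<psi> \<longleftrightarrow>
     (Dom C \<phi> = Dom C \<psi> \<and> Cod C \<phi> = A \<and> Cod C \<psi> = B) \<or>
     (Cod C \<phi> = Cod C \<psi> \<and> Dom C \<phi> = A \<and> Dom C \<psi> = B)"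

definition f_cost :: "('o, 'm) abcat \<Rightarrow> ('o \<Rightarrow> ennreal) \<Rightarrow>
    (ennreal \<Rightarrow> ennreal \<Rightarrow> ennreal \<Rightarrow> ennreal \<Rightarrow> ennreal) \<Rightarrow> 'm \<Rightarrow> 'm \<Rightarrow> ennreal" where
  "f_cost C \<alpha> f \<phi> \<psi> = f (\<alpha> (ker_obj C \<phi>)) (\<alpha> (coker_obj C \<phi>)) (\<alpha> (ker_obj C \<psi>)) (\<alpha> (coker_obj C \<psi>))"

text \<open>Inf of the empty set in ennreal is \<infinity>\<close>
definition dist_f :: "('o, 'm) abcat \<Rightarrow> ('o \<Rightarrow> ennreal) \<Rightarrow>
    (ennreal \<Rightarrow> ennreal \<Rightarrow> ennreal \<Rightarrow> ennreal \<Rightarrow> ennreal) \<Rightarrow> 'o \<Rightarrow> 'o \<Rightarrow> ennreal" where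
  "dist_f C \<alpha> f A B = Inf {f_cost C \<alpha> f \<phi> \<psi> | \<phi> \<psi>. span_or_cospan C A B \<phi> \<psi>}"

definition ext_pseudometric :: "('o \<Rightarrow> 'o \<Rightarrow> ennreal) \<Rightarrow> bool" where
  "ext_pseudometric d \<longleftrightarrow> (\<forall>A. d A A = 0) \<and> (\<forall>A B. d A B = d B A) \<and>
     (\<forall>A B D. d A D \<le> d A B + d B D)"

end

theory Submission imports Defs begin

definition opc :: "('o,'m) abcat \<Rightarrow> ('o,'m) abcat" where
  "opc C = \<lparr>Dom = Cod C, Cod = Dom C, Comp = (\<lambda>g f. Comp C f g), Ident = Ident C,
           Add = Add C, Zero = (\<lambda>a b. Zero C b a)\<rparr>"

lemma opc_simps[simp]: "Dom (opc C) = Cod C" "Cod (opc C) = Dom C" "Comp (opc C) g f = Comp C f g"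
  "Ident (opc C) = Ident C" "Add (opc C) = Add C" "Zero (opc C) a b = Zero C b a"
  by (simp_all add: opc_def)

lemma opc_opc[simp]: "opc (opc C) = C"
  by (simp add: opc_def fun_eq_iff)

lemma hom_opc[simp]: "hom (opc C) a b = hom C b a" by (auto simp: hom_def)
lemma mono_opc[simp]: "is_mono (opc C) f = is_epi C f" by (auto simp: is_mono_def is_epi_def)
lemma epi_opc[simp]: "is_epi (opc C) f = is_mono C f" by (auto simp: is_mono_def is_epi_def)
lemma kernel_opc[simp]: "is_kernel (opc C) k f = is_cokernel C k f"
  by (simp add: is_kernel_def is_cokernel_def conj_ac)
lemma cokernel_opc[simp]: "is_cokernel (opc C) k f = is_kernel C k f"
  by (simp add: is_kernel_def is_cokernel_def conj_ac)
lemma kernel_opc'[simp]: "is_kernel (opc C) = is_cokernel C" by (simp add: fun_eq_iff)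
lemma cokernel_opc'[simp]: "is_cokernel (opc C) = is_kernel C" by (simp add: fun_eq_iff)
lemma zero_obj_opc[simp]: "is_zero_obj (opc C) z = is_zero_obj C z"
  by (simp add: is_zero_obj_def conj_commute)
lemma ker_obj_opc[simp]: "ker_obj (opc C) f = coker_obj C f"
  by (simp add: ker_obj_def coker_obj_def)
lemma coker_obj_opc[simp]: "coker_obj (opc C) f = ker_obj C f"
  by (simp add: ker_obj_def coker_obj_def)

lemma abelian_opc: assumes "abelian_category C" shows "abelian_category (opc C)"
proof -
  note A = assms[unfolded abelian_category_def]
  show ?thesis unfolding abelian_category_def
    apply (intro conjI)
    using A apply (simp_all add: hom_def)
    apply (auto simp: hom_def)
    subgoal premises P for a b x using P(14)[rule_format, of a b]
      apply (elim exE conjE)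
      subgoal for i1 i2 p1 p2 by (rule exI[of _ p1], rule conjI, simp, rule exI[of _ p2], simp, rule exI[of _ i1], simp, rule exI[of _ i2], simp)
      done
    done


qed

locale ab = fixes C :: "('o,'m) abcat" assumes abel: "abelian_category C"
begin

abbreviation cp (infixr "\<cdot>" 55) where "g \<cdot> f \<equiv> Comp C g f"
abbreviation dm where "dm \<equiv> Dom C"
abbreviation cd where "cd \<equiv> Cod C"
abbreviation zr where "zr \<equiv> Zero C"
abbreviation idn where "idn \<equiv> Ident C"
abbreviation ad where "ad \<equiv> Add C"

lemma id_dom[simp]: "dm (idn a) = a" and id_cod[simp]: "cd (idn a) = a"
  using abel unfolding abelian_category_def hom_def by auto
lemma comp_dom[simp]: "dm g = cd f \<Longrightarrow> dm (g \<cdot> f) = dm f"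
  and comp_cod[simp]: "dm g = cd f \<Longrightarrow> cd (g \<cdot> f) = cd g"
  using abel unfolding abelian_category_def hom_def by auto
lemma id_left[simp]: "cd f = a \<Longrightarrow> idn a \<cdot> f = f"
  and id_right[simp]: "dm f = a \<Longrightarrow> f \<cdot> idn a = f"
  using abel unfolding abelian_category_def hom_def by auto
lemma assoc: "dm g = cd f \<Longrightarrow> dm h = cd g \<Longrightarrow> h \<cdot> (g \<cdot> f) = (h \<cdot> g) \<cdot> f"
  using abel unfolding abelian_category_def hom_def by auto
lemma zero_dom[simp]: "dm (zr a b) = a" and zero_cod[simp]: "cd (zr a b) = b"
  using abel unfolding abelian_category_def hom_def by auto
lemma add_dom[simp]: "dm g = dm f \<Longrightarrow> cd g = cd f \<Longrightarrow> dm (ad f g) = dm f"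
  and add_cod[simp]: "dm g = dm f \<Longrightarrow> cd g = cd f \<Longrightarrow> cd (ad f g) = cd f"
  using abel unfolding abelian_category_def hom_def by auto
lemma add_assoc: "dm g = dm f \<Longrightarrow> cd g = cd f \<Longrightarrow> dm h = dm f \<Longrightarrow> cd h = cd f \<Longrightarrow>
   ad (ad f g) h = ad f (ad g h)"
  using abel unfolding abelian_category_def hom_def by auto
lemma add_comm: "dm g = dm f \<Longrightarrow> cd g = cd f \<Longrightarrow> ad f g = ad g f"
  using abel unfolding abelian_category_def hom_def by auto
lemma zero_add[simp]: "dm f = a \<Longrightarrow> cd f = b \<Longrightarrow> ad (zr a b) f = f"
  using abel unfolding abelian_category_def hom_def by auto
lemma add_zero[simp]: "dm f = a \<Longrightarrow> cd f = b \<Longrightarrow> ad f (zr a b) = f"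
  using zero_add add_comm by (metis zero_cod zero_dom)
lemma neg_ex: "\<exists>g. dm g = dm f \<and> cd g = cd f \<and> ad f g = zr (dm f) (cd f)"
  using abel unfolding abelian_category_def hom_def by auto
lemma comp_add_left: "dm g = dm f \<Longrightarrow> cd g = cd f \<Longrightarrow> dm h = cd f \<Longrightarrow>
   h \<cdot> ad f g = ad (h \<cdot> f) (h \<cdot> g)"
  using abel unfolding abelian_category_def hom_def by auto
lemma comp_add_right: "dm g = dm f \<Longrightarrow> cd g = cd f \<Longrightarrow> cd h = dm f \<Longrightarrow>
   ad f g \<cdot> h = ad (f \<cdot> h) (g \<cdot> h)"
  using abel unfolding abelian_category_def hom_def by auto
lemma zero_obj_ex: "\<exists>z. is_zero_obj C z"
  using abel unfolding abelian_category_def by auto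
lemma biprod_ex: "\<exists>p i1 i2 p1 p2. dm i1 = a \<and> cd i1 = p \<and> dm i2 = b \<and> cd i2 = p \<and>
   dm p1 = p \<and> cd p1 = a \<and> dm p2 = p \<and> cd p2 = b \<and>
   p1 \<cdot> i1 = idn a \<and> p2 \<cdot> i2 = idn b \<and> p2 \<cdot> i1 = zr a b \<and> p1 \<cdot> i2 = zr b a \<and>
   ad (i1 \<cdot> p1) (i2 \<cdot> p2) = idn p"
proof -
  have "\<forall>a b. \<exists>p i1 i2 p1 p2. i1 \<in> hom C a p \<and> i2 \<in> hom C b p \<and> p1 \<in> hom C p a \<and> p2 \<in> hom C p b \<and>
        p1 \<cdot> i1 = idn a \<and> p2 \<cdot> i2 = idn b \<and>
        p2 \<cdot> i1 = zr a b \<and> p1 \<cdot> i2 = zr b a \<and>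
        ad (i1 \<cdot> p1) (i2 \<cdot> p2) = idn p"
    using abel unfolding abelian_category_def by blast
  then show ?thesis unfolding hom_def by blast
qed
lemma ker_ex: "\<exists>k. is_kernel C k f"
  using abel unfolding abelian_category_def by auto
lemma coker_ex: "\<exists>k. is_cokernel C k f"
  using abel unfolding abelian_category_def by auto
lemma mono_normal: "is_mono C m \<Longrightarrow> \<exists>g. is_kernel C m g"
  using abel unfolding abelian_category_def by auto
lemma epi_normal: "is_epi C m \<Longrightarrow> \<exists>g. is_cokernel C m g"
  using abel unfolding abelian_category_def by auto

lemma idem_zero: assumes "dm x = a" "cd x = b" "ad x x = x" shows "x = zr a b"
proof -
  obtain n where n: "dm n = a" "cd n = b" "ad x n = zr a b" using neg_ex[of x] assms by auto
  have "zr a b = ad (ad x x) n" using assms n by simp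
  also have "\<dots> = ad x (ad x n)" by (rule add_assoc) (use assms n in auto)
  also have "\<dots> = x" using n assms by simp
  finally show ?thesis by simp
qed

lemma comp_zero_right[simp]: assumes "dm h = b" shows "h \<cdot> zr a b = zr a (cd h)"
proof -
  have "ad (zr a b) (zr a b) = zr a b" by simp
  hence "h \<cdot> zr a b = ad (h \<cdot> zr a b) (h \<cdot> zr a b)" using comp_add_left[of "zr a b" "zr a b" h] assms
    by simp
  thus ?thesis using idem_zero[of "h \<cdot> zr a b" a "cd h"] assms by simp
qed

lemma comp_zero_left[simp]: assumes "cd h = a" shows "zr a b \<cdot> h = zr (dm h) b"
proof -
  have "ad (zr a b) (zr a b) = zr a b" by simp
  hence "zr a b \<cdot> h = ad (zr a b \<cdot> h) (zr a b \<cdot> h)" using comp_add_right[of "zr a b" "zr a b" h] assms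
    by simp
  thus ?thesis using idem_zero[of "zr a b \<cdot> h" "dm h" b] assms by simp
qed

end

lemma ab_opc: "ab C \<Longrightarrow> ab (opc C)"
  unfolding ab_def by (rule abelian_opc)


context ab begin

lemma opab: "ab (opc C)" using ab_opc ab_axioms by blast

lemma ker_cd: "is_kernel C k f \<Longrightarrow> cd k = dm f" unfolding is_kernel_def by auto
lemma ker_zero: "is_kernel C k f \<Longrightarrow> f \<cdot> k = zr (dm k) (cd f)" unfolding is_kernel_def by auto
lemma ker_lift: assumes "is_kernel C k f" "cd g = dm f" "f \<cdot> g = zr (dm g) (cd f)"
  obtains u where "dm u = dm g" "cd u = dm k" "k \<cdot> u = g"
  using assms unfolding is_kernel_def by metis
lemma ker_uniq: assumes "is_kernel C k f" "cd g = dm f" "f \<cdot> g = zr (dm g) (cd f)"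
  "dm u = dm g" "cd u = dm k" "k \<cdot> u = g" "dm u' = dm g" "cd u' = dm k" "k \<cdot> u' = g"
  shows "u = u'"
  using assms unfolding is_kernel_def by metis

lemma ker_mono: assumes K: "is_kernel C k f" shows "is_mono C k"
  unfolding is_mono_def
proof (intro allI impI)
  fix g h assume H: "cd g = dm k \<and> cd h = dm k \<and> dm g = dm h \<and> k \<cdot> g = k \<cdot> h"
  have c: "cd k = dm f" using ker_cd[OF K] .
  have "f \<cdot> (k \<cdot> g) = (f \<cdot> k) \<cdot> g" using H c by (intro assoc) auto
  also have "\<dots> = zr (dm g) (cd f)" using H ker_zero[OF K] by simp
  finally have z: "f \<cdot> (k \<cdot> g) = zr (dm (k \<cdot> g)) (cd f)" using H by simp
  show "g = h"
    by (rule ker_uniq[OF K _ z, of g h]) (use H c in auto)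
qed

lemma mono_cancel: assumes "is_mono C m" "cd x = dm m" "cd y = dm m" "dm x = dm y" "m \<cdot> x = m \<cdot> y"
  shows "x = y" using assms unfolding is_mono_def by blast

lemma mono_comp: assumes "is_mono C m" "is_mono C n" "dm m = cd n" shows "is_mono C (m \<cdot> n)"
  unfolding is_mono_def
proof (intro allI impI)
  fix g h assume H: "cd g = dm (m \<cdot> n) \<and> cd h = dm (m \<cdot> n) \<and> dm g = dm h \<and> (m \<cdot> n) \<cdot> g = (m \<cdot> n) \<cdot> h"
  hence "m \<cdot> (n \<cdot> g) = m \<cdot> (n \<cdot> h)" using assms by (simp add: assoc)
  hence "n \<cdot> g = n \<cdot> h" using mono_cancel[OF assms(1)] H assms by simp
  thus "g = h" using mono_cancel[OF assms(2)] H assms by simp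
qed

lemma mono_right: assumes "is_mono C (m \<cdot> n)" "dm m = cd n" shows "is_mono C n"
  unfolding is_mono_def
proof (intro allI impI)
  fix g h assume H: "cd g = dm n \<and> cd h = dm n \<and> dm g = dm h \<and> n \<cdot> g = n \<cdot> h"
  hence "(m \<cdot> n) \<cdot> g = (m \<cdot> n) \<cdot> h" using assms by (metis assoc)
  thus "g = h" using mono_cancel[OF assms(1)] H assms by simp
qed

lemma mono_zero: assumes "is_mono C m" "cd x = dm m" "m \<cdot> x = zr (dm x) (cd m)"
  shows "x = zr (dm x) (dm m)"
  by (rule mono_cancel[OF assms(1)]) (use assms in simp_all)

lemma mono_by_zero: assumes H: "\<And>x. cd x = dm m \<Longrightarrow> m \<cdot> x = zr (dm x) (cd m) \<Longrightarrow> x = zr (dm x) (dm m)"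
  shows "is_mono C m"
  unfolding is_mono_def
proof (intro allI impI)
  fix g h assume G: "cd g = dm m \<and> cd h = dm m \<and> dm g = dm h \<and> m \<cdot> g = m \<cdot> h"
  obtain n where n: "dm n = dm h" "cd n = cd h" "ad h n = zr (dm h) (cd h)" using neg_ex[of h] by auto
  have "m \<cdot> ad g n = ad (m \<cdot> g) (m \<cdot> n)" using G n by (simp add: comp_add_left)
  also have "\<dots> = ad (m \<cdot> h) (m \<cdot> n)" using G by simp
  also have "\<dots> = m \<cdot> ad h n" by (rule comp_add_left[symmetric]) (use G n in auto)
  also have "\<dots> = zr (dm h) (cd m)" using G n by simp
  finally have "ad g n = zr (dm (ad g n)) (dm m)" using H[of "ad g n"] G n by simp
  hence gn: "ad g n = zr (dm h) (cd h)" using G n by simp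
  have "g = ad g (ad h n)" using G n by simp
  also have "\<dots> = ad g (ad n h)" using G n add_comm[of n h] by simp
  also have "\<dots> = ad (ad g n) h" using G n by (simp add: add_assoc)
  also have "\<dots> = h" using gn G by simp
  finally show "g = h" .
qed

lemma coker_dm: "is_cokernel C q f \<Longrightarrow> dm q = cd f"
  using ab.ker_cd[OF opab, of q f] by simp
lemma coker_zero: "is_cokernel C q f \<Longrightarrow> q \<cdot> f = zr (dm f) (cd q)"
  using ab.ker_zero[OF opab, of q f] by simp
lemma coker_lift: assumes "is_cokernel C q f" "dm g = cd f" "g \<cdot> f = zr (dm f) (cd g)"
  obtains u where "dm u = cd q" "cd u = cd g" "u \<cdot> q = g"
  using ab.ker_lift[OF opab, of q f g] assms by auto
lemma coker_epi: "is_cokernel C q f \<Longrightarrow> is_epi C q"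
  using ab.ker_mono[OF opab, of q f] by simp
lemma epi_cancel: assumes "is_epi C m" "dm x = cd m" "dm y = cd m" "cd x = cd y" "x \<cdot> m = y \<cdot> m"
  shows "x = y" using assms unfolding is_epi_def by blast
lemma epi_comp: assumes "is_epi C m" "is_epi C n" "dm m = cd n" shows "is_epi C (m \<cdot> n)"
  using ab.mono_comp[OF opab, of n m] assms by simp
lemma epi_left: assumes "is_epi C (m \<cdot> n)" "dm m = cd n" shows "is_epi C m"
  using ab.mono_right[OF opab, of n m] assms by simp
lemma epi_zero: assumes "is_epi C m" "dm x = cd m" "x \<cdot> m = zr (dm m) (cd x)"
  shows "x = zr (cd m) (cd x)"
  using ab.mono_zero[OF opab, of m x] assms by simp
lemma epi_by_zero: assumes H: "\<And>x. dm x = cd m \<Longrightarrow> x \<cdot> m = zr (dm m) (cd x) \<Longrightarrow> x = zr (cd m) (cd x)"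
  shows "is_epi C m"
  using ab.mono_by_zero[OF opab, of m] assms by simp

end


context ab begin

lemma mono_ker_coker: assumes M: "is_mono C m" and Q: "is_cokernel C q m" shows "is_kernel C m q"
proof -
  obtain g where G: "is_kernel C m g" using mono_normal[OF M] by blast
  have cm: "cd m = dm g" using ker_cd[OF G] .
  have dq: "dm q = cd m" using coker_dm[OF Q] .
  obtain t where t: "dm t = cd q" "cd t = cd g" "t \<cdot> q = g"
    using coker_lift[OF Q, of g] ker_zero[OF G] cm by metis
  show ?thesis unfolding is_kernel_def
  proof (intro conjI allI impI)
    show "cd m = dm q" using dq by simp
    show "q \<cdot> m = zr (dm m) (cd q)" using coker_zero[OF Q] by simp
    fix x assume X: "cd x = dm q \<and> q \<cdot> x = zr (dm x) (cd q)"
    have "g \<cdot> x = t \<cdot> (q \<cdot> x)" using t X dq by (metis assoc)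
    also have "\<dots> = zr (dm x) (cd g)" using X t by simp
    finally have gx: "g \<cdot> x = zr (dm x) (cd g)" .
    obtain u where u: "dm u = dm x" "cd u = dm m" "m \<cdot> u = x"
      using ker_lift[OF G, of x] gx X dq cm by metis
    show "\<exists>!u. dm u = dm x \<and> cd u = dm m \<and> m \<cdot> u = x"
    proof (rule ex1I[of _ u])
      show "dm u = dm x \<and> cd u = dm m \<and> m \<cdot> u = x" using u by simp
      fix v assume "dm v = dm x \<and> cd v = dm m \<and> m \<cdot> v = x"
      thus "v = u" using mono_cancel[OF M, of v u] u by simp
    qed
  qed
qed

lemma epi_coker_ker: assumes "is_epi C e" "is_kernel C k e" shows "is_cokernel C e k"
  using ab.mono_ker_coker[OF opab, of e k] assms by simp

lemma image_fact: assumes R: "is_cokernel C r b" and I: "is_kernel C i r"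
  obtains e where "dm e = dm b" "cd e = dm i" "i \<cdot> e = b" "is_epi C e"
proof -
  have cb: "cd b = dm r" using coker_dm[OF R] by simp
  have ci: "cd i = dm r" using ker_cd[OF I] .
  obtain e where e: "dm e = dm b" "cd e = dm i" "i \<cdot> e = b"
    using ker_lift[OF I, of b] coker_zero[OF R] cb by metis
  have "is_epi C e"
  proof (rule epi_by_zero)
    fix g assume g1: "dm g = cd e" and g2: "g \<cdot> e = zr (dm e) (cd g)"
    obtain k where K: "is_kernel C k g" using ker_ex by blast
    have ck: "cd k = dm g" using ker_cd[OF K] .
    obtain e' where e': "dm e' = dm e" "cd e' = dm k" "k \<cdot> e' = e"
      using ker_lift[OF K, of e] g1 g2 by metis
    define m where "m = i \<cdot> k"
    have dmm: "dm m = dm k" "cd m = cd i" using m_def ck g1 e by auto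
    have Mm: "is_mono C m" unfolding m_def
      using mono_comp[OF ker_mono[OF I] ker_mono[OF K]] ck g1 e by simp
    obtain c where Cc: "is_cokernel C c m" using coker_ex by blast
    have Km: "is_kernel C m c" using mono_ker_coker[OF Mm Cc] .
    have dc: "dm c = cd m" using coker_dm[OF Cc] .
    have "c \<cdot> b = c \<cdot> (m \<cdot> e')" using e e' m_def ck g1 by (metis assoc)
    also have "\<dots> = (c \<cdot> m) \<cdot> e'" using e' dmm dc by (simp add: assoc)
    also have "\<dots> = zr (dm b) (cd c)" using coker_zero[OF Cc] e' e dmm by simp
    finally have cb0: "c \<cdot> b = zr (dm b) (cd c)" .
    obtain t where t: "dm t = cd r" "cd t = cd c" "t \<cdot> r = c"
      using coker_lift[OF R, of c] cb0 dc dmm ci cb by metis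
    have "c \<cdot> i = t \<cdot> (r \<cdot> i)" using t ci by (metis assoc)
    also have "\<dots> = zr (dm i) (cd c)" using ker_zero[OF I] t by simp
    finally have ci0: "c \<cdot> i = zr (dm i) (cd c)" .
    obtain s where s: "dm s = dm i" "cd s = dm m" "m \<cdot> s = i"
      using ker_lift[OF Km, of i] ci0 dc dmm by metis
    have "i \<cdot> (k \<cdot> s) = i \<cdot> idn (dm i)" using s m_def ck g1 e dmm by (simp add: assoc)
    hence ks: "k \<cdot> s = idn (dm i)"
      using mono_cancel[OF ker_mono[OF I], of "k \<cdot> s" "idn (dm i)"] ck g1 e s dmm by simp
    have "g = g \<cdot> (k \<cdot> s)" using ks g1 e by simp
    also have "\<dots> = (g \<cdot> k) \<cdot> s" using ck s dmm by (simp add: assoc)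
    also have "\<dots> = zr (cd e) (cd g)" using ker_zero[OF K] s dmm e by simp
    finally show "g = zr (cd e) (cd g)" .
  qed
  thus ?thesis using that e by blast
qed

lemma coimage_fact: assumes K: "is_kernel C k w" and Q: "is_cokernel C q k"
  obtains u where "dm u = cd q" "cd u = cd w" "u \<cdot> q = w" "is_mono C u"
  using ab.image_fact[OF opab, of k w q] assms by auto

end

locale amp = ab C for C :: "('o,'m) abcat" + fixes \<alpha> :: "'o \<Rightarrow> ennreal" assumes ampl: "amplitude C \<alpha>"
begin

lemma ses: assumes "is_mono C i" "is_epi C p" "is_kernel C i p"
  shows "\<alpha> (dm i) \<le> \<alpha> (cd i)" "\<alpha> (cd p) \<le> \<alpha> (cd i)" "\<alpha> (cd i) \<le> \<alpha> (dm i) + \<alpha> (cd p)"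
  using ampl assms unfolding amplitude_def short_exact_def by blast+

lemma zero_obj_amp: "is_zero_obj C z \<Longrightarrow> \<alpha> z = 0"
  using ampl unfolding amplitude_def by blast

lemma mono_le: assumes "is_mono C m" shows "\<alpha> (dm m) \<le> \<alpha> (cd m)"
proof -
  obtain q where Q: "is_cokernel C q m" using coker_ex by blast
  show ?thesis using ses(1)[OF assms coker_epi[OF Q] mono_ker_coker[OF assms Q]] .
qed

lemma epi_le: assumes "is_epi C e" shows "\<alpha> (cd e) \<le> \<alpha> (dm e)"
proof -
  obtain k where K: "is_kernel C k e" using ker_ex by blast
  show ?thesis using ses(2)[OF ker_mono[OF K] assms K] ker_cd[OF K] by simp
qed

lemma ker_le: assumes K: "is_kernel C k f" and K': "is_kernel C k' f" shows "\<alpha> (dm k') \<le> \<alpha> (dm k)"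
proof -
  obtain u where u: "dm u = dm k'" "cd u = dm k" "k \<cdot> u = k'"
    using ker_lift[OF K, of k'] ker_cd[OF K'] ker_zero[OF K'] by metis
  have "is_mono C u" using mono_right[of k u] ker_mono[OF K'] u ker_cd[OF K] by simp
  thus ?thesis using mono_le[of u] u by simp
qed

lemma ker_obj_eq: assumes K: "is_kernel C k f" shows "\<alpha> (ker_obj C f) = \<alpha> (dm k)"
proof -
  have K0: "is_kernel C (SOME k. is_kernel C k f) f" using someI_ex[OF ker_ex[of f]] .
  show ?thesis unfolding ker_obj_def using ker_le[OF K K0] ker_le[OF K0 K] by (rule antisym)
qed

lemma amp_op: "amp (opc C) \<alpha>"
proof -
  have "amplitude (opc C) \<alpha>" unfolding amplitude_def
  proof (intro conjI allI impI)
    fix z assume "is_zero_obj (opc C) z" thus "\<alpha> z = 0" using zero_obj_amp by simp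
  next
    fix i p assume S: "short_exact (opc C) i p"
    hence E: "is_epi C i" and M: "is_mono C p" and Q: "is_cokernel C i p"
      unfolding short_exact_def by auto
    have K: "is_kernel C p i" using mono_ker_coker[OF M Q] .
    have d: "dm i = cd p" using coker_dm[OF Q] .
    note s = ses[OF M E K]
    show "\<alpha> (Dom (opc C) i) \<le> \<alpha> (Cod (opc C) i)" using s d by simp
    show "\<alpha> (Cod (opc C) p) \<le> \<alpha> (Cod (opc C) i)" using s d by simp
    show "\<alpha> (Cod (opc C) i) \<le> \<alpha> (Dom (opc C) i) + \<alpha> (Cod (opc C) p)" using s d by (simp add: add.commute)
  qed
  thus ?thesis using opab unfolding amp_def amp_axioms_def by blast
qed

lemma coker_obj_eq: assumes "is_cokernel C q f" shows "\<alpha> (coker_obj C f) = \<alpha> (cd q)"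
  using amp.ker_obj_eq[OF amp_op, of q f] assms by simp

lemma ker_comp: assumes gh: "dm g = cd h"
  shows "\<alpha> (ker_obj C (g \<cdot> h)) \<le> \<alpha> (ker_obj C h) + \<alpha> (ker_obj C g)"
proof -
  obtain k where K: "is_kernel C k (g \<cdot> h)" using ker_ex by blast
  have ck: "cd k = dm h" using ker_cd[OF K] gh by simp
  obtain j where J: "is_kernel C j g" using ker_ex by blast
  have cj: "cd j = cd h" using ker_cd[OF J] gh by simp
  have "g \<cdot> (h \<cdot> k) = (g \<cdot> h) \<cdot> k" using gh ck by (simp add: assoc)
  also have "\<dots> = zr (dm k) (cd g)" using ker_zero[OF K] gh by simp
  finally have z1: "g \<cdot> (h \<cdot> k) = zr (dm (h \<cdot> k)) (cd g)" using ck by simp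
  obtain w where w: "dm w = dm (h \<cdot> k)" "cd w = dm j" "j \<cdot> w = h \<cdot> k"
    using ker_lift[OF J, of "h \<cdot> k"] z1 gh ck by (metis comp_cod)
  have dw: "dm w = dm k" using w ck by simp
  obtain k' where K': "is_kernel C k' w" using ker_ex by blast
  obtain q where Q: "is_cokernel C q k'" using coker_ex by blast
  have Mk': "is_mono C k'" using ker_mono[OF K'] .
  have KQ: "is_kernel C k' q" using mono_ker_coker[OF Mk' Q] .
  have s1: "\<alpha> (cd k') \<le> \<alpha> (dm k') + \<alpha> (cd q)" using ses(3)[OF Mk' coker_epi[OF Q] KQ] .
  obtain u where u: "dm u = cd q" "cd u = cd w" "u \<cdot> q = w" "is_mono C u"
    using coimage_fact[OF K' Q] by blast
  have s2: "\<alpha> (cd q) \<le> \<alpha> (dm j)" using mono_le[OF u(4)] u w by simp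
  obtain i0 where I0: "is_kernel C i0 h" using ker_ex by blast
  have ck': "cd k' = dm w" using ker_cd[OF K'] .
  have "h \<cdot> (k \<cdot> k') = (h \<cdot> k) \<cdot> k'" using ck ck' dw by (simp add: assoc)
  also have "\<dots> = (j \<cdot> w) \<cdot> k'" using w by simp
  also have "\<dots> = j \<cdot> (w \<cdot> k')" using ck' w by (simp add: assoc)
  also have "\<dots> = zr (dm k') (cd h)" using ker_zero[OF K'] w cj by simp
  finally have z2: "h \<cdot> (k \<cdot> k') = zr (dm (k \<cdot> k')) (cd h)" using ck' dw by simp
  obtain s where s: "dm s = dm (k \<cdot> k')" "cd s = dm i0" "i0 \<cdot> s = k \<cdot> k'"
    using ker_lift[OF I0, of "k \<cdot> k'"] z2 ck ck' dw by (metis comp_cod)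
  have "is_mono C (k \<cdot> k')" using mono_comp[OF ker_mono[OF K] Mk'] ck' dw by simp
  hence "is_mono C s" using mono_right[of i0 s] s ker_cd[OF I0] by simp
  hence s3: "\<alpha> (dm k') \<le> \<alpha> (dm i0)" using mono_le[of s] s ck' dw by simp
  have "\<alpha> (ker_obj C (g \<cdot> h)) = \<alpha> (cd k')" using ker_obj_eq[OF K] ck' dw by simp
  also have "\<dots> \<le> \<alpha> (dm i0) + \<alpha> (dm j)" using s1 s2 s3 by (meson add_mono order_trans)
  also have "\<dots> = \<alpha> (ker_obj C h) + \<alpha> (ker_obj C g)" using ker_obj_eq[OF I0] ker_obj_eq[OF J] by simp
  finally show ?thesis .
qed

lemma coker_comp: assumes gh: "dm g = cd h"
  shows "\<alpha> (coker_obj C (g \<cdot> h)) \<le> \<alpha> (coker_obj C g) + \<alpha> (coker_obj C h)"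
  using amp.ker_comp[OF amp_op, of h g] assms by simp

end


definition is_pb :: "('o,'m) abcat \<Rightarrow> 'm \<Rightarrow> 'm \<Rightarrow> 'm \<Rightarrow> 'm \<Rightarrow> bool" where
  "is_pb C a b p1 p2 \<longleftrightarrow> Cod C a = Cod C b \<and> Cod C p1 = Dom C a \<and> Cod C p2 = Dom C b \<and>
     Dom C p1 = Dom C p2 \<and> Comp C a p1 = Comp C b p2 \<and>
     (\<forall>x y. Cod C x = Dom C a \<and> Cod C y = Dom C b \<and> Dom C x = Dom C y \<and> Comp C a x = Comp C b y \<longrightarrow>
        (\<exists>w. Dom C w = Dom C x \<and> Cod C w = Dom C p1 \<and> Comp C p1 w = x \<and> Comp C p2 w = y)) \<and>
     (\<forall>w w'. Cod C w = Dom C p1 \<and> Cod C w' = Dom C p1 \<and> Dom C w = Dom C w' \<and>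
        Comp C p1 w = Comp C p1 w' \<and> Comp C p2 w = Comp C p2 w' \<longrightarrow> w = w')"

lemma is_pb_sym: "is_pb C a b p1 p2 \<Longrightarrow> is_pb C b a p2 p1"
  unfolding is_pb_def by metis

context ab begin

lemma assoc_r: "dm g = cd f \<Longrightarrow> dm h = cd g \<Longrightarrow> (h \<cdot> g) \<cdot> f = h \<cdot> (g \<cdot> f)"
  by (simp add: assoc)

lemma add_cancel: assumes "dm X = dm N" "cd X = cd N" "dm Y = dm N" "cd Y = cd N"
  "ad X N = zr (dm N) (cd N)" "ad Y N = zr (dm N) (cd N)" shows "X = Y"
proof -
  have "X = ad X (ad N Y)" using assms add_comm[of Y N] by simp
  also have "\<dots> = ad (ad X N) Y" by (rule add_assoc[symmetric]) (use assms in auto)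
  also have "\<dots> = Y" using assms by simp
  finally show ?thesis .
qed

lemma pb_ex: assumes ab: "cd a = cd b"
  shows "\<exists>p1 p2. is_pb C a b p1 p2 \<and> (is_epi C a \<longrightarrow> is_epi C p2)"
proof -
  define A0 where "A0 = dm a"
  define B0 where "B0 = dm b"
  define Z0 where "Z0 = cd a"
  obtain S i1 i2 \<pi>1 \<pi>2 where bp: "dm i1 = A0" "cd i1 = S" "dm i2 = B0" "cd i2 = S"
   "dm \<pi>1 = S" "cd \<pi>1 = A0" "dm \<pi>2 = S" "cd \<pi>2 = B0"
   "\<pi>1 \<cdot> i1 = idn A0" "\<pi>2 \<cdot> i2 = idn B0" "\<pi>2 \<cdot> i1 = zr A0 B0" "\<pi>1 \<cdot> i2 = zr B0 A0"
   "ad (i1 \<cdot> \<pi>1) (i2 \<cdot> \<pi>2) = idn S"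
    using biprod_ex[of A0 B0] by blast
  obtain n where n: "dm n = B0" "cd n = Z0" "ad b n = zr B0 Z0"
    using neg_ex[of b] ab B0_def Z0_def by auto
  have bd: "dm b = B0" "cd b = Z0" "dm a = A0" "cd a = Z0" using A0_def B0_def Z0_def ab by auto
  define h where "h = ad (a \<cdot> \<pi>1) (n \<cdot> \<pi>2)"
  have hd: "dm h = S" "cd h = Z0" using h_def bp bd n by auto
  have hi1: "h \<cdot> i1 = a"
  proof -
    have "h \<cdot> i1 = ad ((a \<cdot> \<pi>1) \<cdot> i1) ((n \<cdot> \<pi>2) \<cdot> i1)" unfolding h_def
      by (rule comp_add_right) (use bp bd n in auto)
    also have "\<dots> = ad (a \<cdot> (\<pi>1 \<cdot> i1)) (n \<cdot> (\<pi>2 \<cdot> i1))" using bp bd n by (simp add: assoc_r)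
    also have "\<dots> = a" using bp bd n by simp
    finally show ?thesis .
  qed
  have hi2: "h \<cdot> i2 = n"
  proof -
    have "h \<cdot> i2 = ad ((a \<cdot> \<pi>1) \<cdot> i2) ((n \<cdot> \<pi>2) \<cdot> i2)" unfolding h_def
      by (rule comp_add_right) (use bp bd n in auto)
    also have "\<dots> = ad (a \<cdot> (\<pi>1 \<cdot> i2)) (n \<cdot> (\<pi>2 \<cdot> i2))" using bp bd n by (simp add: assoc_r)
    also have "\<dots> = n" using bp bd n by simp
    finally show ?thesis .
  qed
  obtain k where K: "is_kernel C k h" using ker_ex by blast
  have ck: "cd k = S" using ker_cd[OF K] hd by simp
  define p1 where "p1 = \<pi>1 \<cdot> k"
  define p2 where "p2 = \<pi>2 \<cdot> k"
  have pd: "dm p1 = dm k" "cd p1 = A0" "dm p2 = dm k" "cd p2 = B0" using p1_def p2_def bp ck by auto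
  have hk: "ad (a \<cdot> p1) (n \<cdot> p2) = zr (dm k) Z0"
  proof -
    have "zr (dm k) Z0 = h \<cdot> k" using ker_zero[OF K] hd by simp
    also have "\<dots> = ad ((a \<cdot> \<pi>1) \<cdot> k) ((n \<cdot> \<pi>2) \<cdot> k)" unfolding h_def
      by (rule comp_add_right) (use bp bd n ck in auto)
    also have "\<dots> = ad (a \<cdot> p1) (n \<cdot> p2)" unfolding p1_def p2_def using bp bd n ck by (simp add: assoc_r)
    finally show ?thesis by simp
  qed
  have bk: "ad (b \<cdot> p2) (n \<cdot> p2) = zr (dm k) Z0"
  proof -
    have "ad (b \<cdot> p2) (n \<cdot> p2) = ad b n \<cdot> p2" by (rule comp_add_right[symmetric]) (use bd n pd in auto)
    thus ?thesis using n pd by simp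
  qed
  have comm: "a \<cdot> p1 = b \<cdot> p2"
    by (rule add_cancel[of "a \<cdot> p1" "n \<cdot> p2" "b \<cdot> p2"]) (use hk bk bd n pd in auto)
  have lift: "\<exists>w. dm w = dm x \<and> cd w = dm p1 \<and> p1 \<cdot> w = x \<and> p2 \<cdot> w = y"
    if X: "cd x = dm a" "cd y = dm b" "dm x = dm y" "a \<cdot> x = b \<cdot> y" for x y
  proof -
    define s where "s = ad (i1 \<cdot> x) (i2 \<cdot> y)"
    have sd: "dm s = dm x" "cd s = S" using s_def bp bd X by auto
    have "h \<cdot> s = ad (h \<cdot> (i1 \<cdot> x)) (h \<cdot> (i2 \<cdot> y))" unfolding s_def
      by (rule comp_add_left) (use bp bd X hd in auto)
    also have "\<dots> = ad ((h \<cdot> i1) \<cdot> x) ((h \<cdot> i2) \<cdot> y)" using bp bd X hd by (simp add: assoc_r)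
    also have "\<dots> = ad (b \<cdot> y) (n \<cdot> y)" using hi1 hi2 X by simp
    also have "\<dots> = ad b n \<cdot> y" by (rule comp_add_right[symmetric]) (use bd n X in auto)
    also have "\<dots> = zr (dm s) (cd h)" using n X bd sd hd by simp
    finally have hs: "h \<cdot> s = zr (dm s) (cd h)" .
    obtain w where w: "dm w = dm s" "cd w = dm k" "k \<cdot> w = s"
      using ker_lift[OF K, of s] hs sd hd by metis
    have "p1 \<cdot> w = \<pi>1 \<cdot> s" unfolding p1_def using w bp ck by (simp add: assoc[symmetric])
    also have "\<dots> = ad (\<pi>1 \<cdot> (i1 \<cdot> x)) (\<pi>1 \<cdot> (i2 \<cdot> y))" unfolding s_def
      by (rule comp_add_left) (use bp bd X in auto)
    also have "\<dots> = x" using bp bd X by (simp add: assoc)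
    finally have 1: "p1 \<cdot> w = x" .
    have "p2 \<cdot> w = \<pi>2 \<cdot> s" unfolding p2_def using w bp ck by (simp add: assoc[symmetric])
    also have "\<dots> = ad (\<pi>2 \<cdot> (i1 \<cdot> x)) (\<pi>2 \<cdot> (i2 \<cdot> y))" unfolding s_def
      by (rule comp_add_left) (use bp bd X in auto)
    also have "\<dots> = y" using bp bd X by (simp add: assoc)
    finally have 2: "p2 \<cdot> w = y" .
    show ?thesis using 1 2 w sd pd by auto
  qed
  have jm: "w = w'" if W: "cd w = dm p1" "cd w' = dm p1" "dm w = dm w'" "p1 \<cdot> w = p1 \<cdot> w'" "p2 \<cdot> w = p2 \<cdot> w'"
    for w w'
  proof -
    have e: "k \<cdot> v = ad (i1 \<cdot> (p1 \<cdot> v)) (i2 \<cdot> (p2 \<cdot> v))" if "cd v = dm k" for v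
    proof -
      have "k \<cdot> v = idn S \<cdot> (k \<cdot> v)" using that ck by simp
      also have "\<dots> = ad (i1 \<cdot> \<pi>1) (i2 \<cdot> \<pi>2) \<cdot> (k \<cdot> v)" using bp by simp
      also have "\<dots> = ad ((i1 \<cdot> \<pi>1) \<cdot> (k \<cdot> v)) ((i2 \<cdot> \<pi>2) \<cdot> (k \<cdot> v))"
        by (rule comp_add_right) (use bp ck that in auto)
      also have "\<dots> = ad (i1 \<cdot> (p1 \<cdot> v)) (i2 \<cdot> (p2 \<cdot> v))"
        unfolding p1_def p2_def using bp ck that by (simp add: assoc_r)
      finally show ?thesis .
    qed
    have "k \<cdot> w = k \<cdot> w'" using e[of w] e[of w'] W pd by simp
    thus ?thesis using mono_cancel[OF ker_mono[OF K]] W pd by simp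
  qed
  have pb: "is_pb C a b p1 p2" unfolding is_pb_def
    using comm lift jm pd bd by auto
  have ep: "is_epi C p2" if E: "is_epi C a"
  proof -
    have Eh: "is_epi C h"
    proof (rule epi_by_zero)
      fix x assume x: "dm x = cd h" "x \<cdot> h = zr (dm h) (cd x)"
      have "x \<cdot> a = (x \<cdot> h) \<cdot> i1" using hi1[symmetric] x(1) hd bp by (simp add: assoc_r)
      also have "\<dots> = zr (dm a) (cd x)" using x bp bd hd by simp
      finally show "x = zr (cd h) (cd x)" using epi_zero[OF E, of x] x hd bd by simp
    qed
    have Qh: "is_cokernel C h k" using epi_coker_ker[OF Eh K] .
    show ?thesis
    proof (rule epi_by_zero)
      fix g assume g: "dm g = cd p2" "g \<cdot> p2 = zr (dm p2) (cd g)"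
      have gd: "dm g = B0" using g pd by simp
      have "(g \<cdot> \<pi>2) \<cdot> k = zr (dm k) (cd (g \<cdot> \<pi>2))" using g pd bp ck unfolding p2_def by (simp add: assoc_r)
      then obtain t where t: "dm t = cd h" "cd t = cd (g \<cdot> \<pi>2)" "t \<cdot> h = g \<cdot> \<pi>2"
        using coker_lift[OF Qh, of "g \<cdot> \<pi>2"] gd bp ck by (metis comp_dom)
      have "t \<cdot> a = (t \<cdot> h) \<cdot> i1" using hi1[symmetric] t(1) hd bp by (simp add: assoc_r)
      also have "\<dots> = g \<cdot> (\<pi>2 \<cdot> i1)" using t gd bp by (simp add: assoc_r)
      also have "\<dots> = zr (dm a) (cd t)" using bp gd t bd by simp
      finally have "t = zr (cd a) (cd t)" using epi_zero[OF E, of t] t hd bd by simp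
      have "g = g \<cdot> (\<pi>2 \<cdot> i2)" using bp gd by simp
      also have "\<dots> = (t \<cdot> h) \<cdot> i2" using t gd bp by (simp add: assoc_r)
      also have "\<dots> = t \<cdot> n" using hi2 t(1) hd bp by (simp add: assoc_r)
      also have "\<dots> = zr (cd p2) (cd g)" using \<open>t = _\<close> t n bd pd gd bp by simp
      finally show "g = zr (cd p2) (cd g)" .
    qed
  qed
  show ?thesis using pb ep by blast
qed

end


context ab begin

lemma epi_pb: assumes E: "is_epi C e" and c: "cd v = cd e"
  obtains e' z where "is_epi C e'" "cd e' = dm v" "cd z = dm e" "dm z = dm e'" "e \<cdot> z = v \<cdot> e'"
proof -
  obtain p1 p2 where P: "is_pb C e v p1 p2" "is_epi C p2" using pb_ex[of e v] c E by auto
  show ?thesis using that[of p2 p1] P unfolding is_pb_def by auto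
qed

end

context amp begin

lemma pb_ker: assumes P: "is_pb C a b p1 p2" shows "\<alpha> (ker_obj C p1) \<le> \<alpha> (ker_obj C b)"
proof -
  have Pd: "cd a = cd b" "cd p1 = dm a" "cd p2 = dm b" "dm p1 = dm p2" "a \<cdot> p1 = b \<cdot> p2"
    using P unfolding is_pb_def by auto
  have plift: "\<And>x y. cd x = dm a \<Longrightarrow> cd y = dm b \<Longrightarrow> dm x = dm y \<Longrightarrow> a \<cdot> x = b \<cdot> y \<Longrightarrow>
     \<exists>w. dm w = dm x \<and> cd w = dm p1 \<and> p1 \<cdot> w = x \<and> p2 \<cdot> w = y"
    using P unfolding is_pb_def by blast
  have pjm: "\<And>w w'. cd w = dm p1 \<Longrightarrow> cd w' = dm p1 \<Longrightarrow> dm w = dm w' \<Longrightarrow>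
        p1 \<cdot> w = p1 \<cdot> w' \<Longrightarrow> p2 \<cdot> w = p2 \<cdot> w' \<Longrightarrow> w = w'"
    using P unfolding is_pb_def by blast
  obtain i where I: "is_kernel C i p1" using ker_ex by blast
  obtain kb where Kb: "is_kernel C kb b" using ker_ex by blast
  have ci: "cd i = dm p1" using ker_cd[OF I] .
  have "b \<cdot> (p2 \<cdot> i) = (a \<cdot> p1) \<cdot> i" using Pd ci by (simp add: assoc)
  also have "\<dots> = a \<cdot> (p1 \<cdot> i)" using Pd ci by (simp add: assoc)
  also have "\<dots> = zr (dm (p2 \<cdot> i)) (cd b)" using ker_zero[OF I] Pd ci by simp
  finally have z: "b \<cdot> (p2 \<cdot> i) = zr (dm (p2 \<cdot> i)) (cd b)" .
  obtain t where t: "dm t = dm (p2 \<cdot> i)" "cd t = dm kb" "kb \<cdot> t = p2 \<cdot> i"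
    using ker_lift[OF Kb, of "p2 \<cdot> i"] z Pd ci by (metis comp_cod)
  have "is_mono C t" unfolding is_mono_def
  proof (intro allI impI)
    fix x y assume X: "cd x = dm t \<and> cd y = dm t \<and> dm x = dm y \<and> t \<cdot> x = t \<cdot> y"
    have dt: "dm t = dm i" using t Pd ci by simp
    have 1: "p1 \<cdot> (i \<cdot> x) = p1 \<cdot> (i \<cdot> y)" using X dt ci ker_zero[OF I] by (simp add: assoc)
    have "p2 \<cdot> (i \<cdot> x) = (kb \<cdot> t) \<cdot> x" using X dt ci t Pd by (simp add: assoc)
    also have "\<dots> = kb \<cdot> (t \<cdot> y)" using X t(1,2) ker_cd[OF Kb] by (simp add: assoc_r)
    also have "\<dots> = p2 \<cdot> (i \<cdot> y)" using X dt ci t Pd ker_cd[OF Kb] by (simp add: assoc)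
    finally have 2: "p2 \<cdot> (i \<cdot> x) = p2 \<cdot> (i \<cdot> y)" .
    have "i \<cdot> x = i \<cdot> y" using pjm[OF _ _ _ 1 2] X dt ci by auto
    thus "x = y" using mono_cancel[OF ker_mono[OF I]] X dt by simp
  qed
  hence "\<alpha> (dm t) \<le> \<alpha> (cd t)" by (rule mono_le)
  thus ?thesis using ker_obj_eq[OF I] ker_obj_eq[OF Kb] t Pd ci by simp
qed

lemma pb_coker: assumes P: "is_pb C a b p1 p2" shows "\<alpha> (coker_obj C p1) \<le> \<alpha> (coker_obj C b)"
proof -
  have Pd: "cd a = cd b" "cd p1 = dm a" "cd p2 = dm b" "dm p1 = dm p2" "a \<cdot> p1 = b \<cdot> p2"
    using P unfolding is_pb_def by auto
  have plift: "\<And>x y. cd x = dm a \<Longrightarrow> cd y = dm b \<Longrightarrow> dm x = dm y \<Longrightarrow> a \<cdot> x = b \<cdot> y \<Longrightarrow>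
     \<exists>w. dm w = dm x \<and> cd w = dm p1 \<and> p1 \<cdot> w = x \<and> p2 \<cdot> w = y"
    using P unfolding is_pb_def by blast
  have pjm: "\<And>w w'. cd w = dm p1 \<Longrightarrow> cd w' = dm p1 \<Longrightarrow> dm w = dm w' \<Longrightarrow>
        p1 \<cdot> w = p1 \<cdot> w' \<Longrightarrow> p2 \<cdot> w = p2 \<cdot> w' \<Longrightarrow> w = w'"
    using P unfolding is_pb_def by blast
  obtain q where Q: "is_cokernel C q p1" using coker_ex by blast
  obtain r where R: "is_cokernel C r b" using coker_ex by blast
  obtain ib where Ib: "is_kernel C ib r" using ker_ex by blast
  have dq: "dm q = dm a" using coker_dm[OF Q] Pd by simp
  have dr: "dm r = cd b" using coker_dm[OF R] .
  have cib: "cd ib = cd b" using ker_cd[OF Ib] dr by simp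
  obtain eb where eb: "dm eb = dm b" "cd eb = dm ib" "ib \<cdot> eb = b" "is_epi C eb"
    using image_fact[OF R Ib] by blast
  have "(r \<cdot> a) \<cdot> p1 = (r \<cdot> b) \<cdot> p2" using Pd dr by (simp add: assoc_r)
  also have "\<dots> = zr (dm p1) (cd (r \<cdot> a))" using coker_zero[OF R] Pd dr by simp
  finally have z1: "(r \<cdot> a) \<cdot> p1 = zr (dm p1) (cd (r \<cdot> a))" .
  obtain u where u: "dm u = cd q" "cd u = cd (r \<cdot> a)" "u \<cdot> q = r \<cdot> a"
    using coker_lift[OF Q, of "r \<cdot> a"] z1 Pd dr by (metis comp_dom)
  have cu: "cd u = cd r" using u Pd dr by simp
  have "is_mono C u"
  proof (rule mono_by_zero)
    fix x assume x: "cd x = dm u" "u \<cdot> x = zr (dm x) (cd u)"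
    obtain e1 y where ey: "is_epi C e1" "cd e1 = dm x" "cd y = dm q" "dm y = dm e1" "q \<cdot> y = x \<cdot> e1"
      using epi_pb[OF coker_epi[OF Q], of x] x u by metis
    have "r \<cdot> (a \<cdot> y) = (u \<cdot> q) \<cdot> y" using u ey dq dr Pd by (simp add: assoc)
    also have "\<dots> = (u \<cdot> x) \<cdot> e1" using u(1) ey(2,3,5) x(1) by (simp add: assoc_r)
    also have "\<dots> = zr (dm (a \<cdot> y)) (cd r)" using x ey cu dq by simp
    finally have z2: "r \<cdot> (a \<cdot> y) = zr (dm (a \<cdot> y)) (cd r)" .
    obtain v where v: "dm v = dm (a \<cdot> y)" "cd v = dm ib" "ib \<cdot> v = a \<cdot> y"
      using ker_lift[OF Ib, of "a \<cdot> y"] z2 dr Pd ey dq by (metis comp_cod)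
    obtain e2 z where ez: "is_epi C e2" "cd e2 = dm v" "cd z = dm eb" "dm z = dm e2" "eb \<cdot> z = v \<cdot> e2"
      using epi_pb[OF eb(4), of v] v eb by metis
    have "a \<cdot> (y \<cdot> e2) = (ib \<cdot> v) \<cdot> e2" using v ez ey dq by (simp add: assoc)
    also have "\<dots> = ib \<cdot> (eb \<cdot> z)" using v(1,2) ez(2,5) by (simp add: assoc_r)
    also have "\<dots> = b \<cdot> z" using eb(2,3) ez(3) assoc[of eb z ib] by simp
    finally have az: "a \<cdot> (y \<cdot> e2) = b \<cdot> z" .
    obtain w where w: "dm w = dm (y \<cdot> e2)" "cd w = dm p1" "p1 \<cdot> w = y \<cdot> e2"
      using plift[OF _ _ _ az] az ey ez v eb dq Pd by auto
    have "x \<cdot> (e1 \<cdot> e2) = (q \<cdot> y) \<cdot> e2" using ey ez v dq by (simp add: assoc)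
    also have "\<dots> = (q \<cdot> p1) \<cdot> w" using w(2,3) ey(3) ez(2) v(1) dq Pd by (simp add: assoc_r)
    also have "\<dots> = zr (cd (e1 \<cdot> e2)) (cd x) \<cdot> (e1 \<cdot> e2)"
      using coker_zero[OF Q] w ey ez v x u Pd dq by simp
    finally have "x \<cdot> (e1 \<cdot> e2) = zr (cd (e1 \<cdot> e2)) (cd x) \<cdot> (e1 \<cdot> e2)" .
    moreover have "is_epi C (e1 \<cdot> e2)" using epi_comp[OF ey(1) ez(1)] ez v ey dq by simp
    ultimately have "x = zr (cd (e1 \<cdot> e2)) (cd x)"
      using epi_cancel[of "e1 \<cdot> e2" x "zr (cd (e1 \<cdot> e2)) (cd x)"] ey ez v dq by simp
    thus "x = zr (dm x) (dm u)" using ey ez v x dq by simp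
  qed
  hence "\<alpha> (dm u) \<le> \<alpha> (cd u)" by (rule mono_le)
  thus ?thesis using coker_obj_eq[OF Q] coker_obj_eq[OF R] u cu by simp
qed

end

lemma ennreal_Inf_add_const: "S \<noteq> {} \<Longrightarrow> Inf S + (c::ennreal) = (INF s\<in>S. s + c)"
  using continuous_at_Inf_mono[of "\<lambda>x. x + c" S] continuous_add[of "at_right (Inf S)" "\<lambda>x. x" "\<lambda>x. c"]
  by (auto simp: mono_def add_right_mono)

lemma ennreal_le_Inf_add: assumes "\<And>x y. x \<in> S \<Longrightarrow> y \<in> T \<Longrightarrow> (d::ennreal) \<le> x + y"
  shows "d \<le> Inf S + Inf T"
proof (cases "S = {} \<or> T = {}")
  case True thus ?thesis by auto
next
  case False
  have "d \<le> x + Inf T" if "x \<in> S" for x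
  proof -
    have "x + Inf T = Inf T + x" by (simp add: add.commute)
    also have "\<dots> = (INF y\<in>T. y + x)" using False ennreal_Inf_add_const by blast
    finally show ?thesis using assms[OF that] by (auto intro!: INF_greatest simp: add.commute)
  qed
  hence "d \<le> (INF x\<in>S. x + Inf T)" by (auto intro!: INF_greatest)
  thus ?thesis using ennreal_Inf_add_const[of S "Inf T"] False by simp
qed

context ab begin
lemma ker_id: assumes Z: "is_zero_obj C z" shows "is_kernel C (zr z A) (idn A)"
  unfolding is_kernel_def
proof (intro conjI allI impI)
  show "cd (zr z A) = dm (idn A)" by simp
  show "idn A \<cdot> zr z A = zr (dm (zr z A)) (cd (idn A))" by simp
  fix g assume g: "cd g = dm (idn A) \<and> idn A \<cdot> g = zr (dm g) (cd (idn A))"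
  have cg: "cd g = A" using g by simp
  have g0: "g = zr (dm g) A" using g id_left[OF cg] by simp
  show "\<exists>!u. dm u = dm g \<and> cd u = dm (zr z A) \<and> zr z A \<cdot> u = g"
  proof (rule ex1I[of _ "zr (dm g) z"])
    show "dm (zr (dm g) z) = dm g \<and> cd (zr (dm g) z) = dm (zr z A) \<and> zr z A \<cdot> zr (dm g) z = g"
      using g0 by simp
    fix u assume u: "dm u = dm g \<and> cd u = dm (zr z A) \<and> zr z A \<cdot> u = g"
    have "\<exists>!f. f \<in> hom C (dm g) z" using Z unfolding is_zero_obj_def by blast
    moreover have "u \<in> hom C (dm g) z" "zr (dm g) z \<in> hom C (dm g) z" using u by (auto simp: hom_def)
    ultimately show "u = zr (dm g) z" by blast
  qed
qed

lemma coker_id: assumes Z: "is_zero_obj C z" shows "is_cokernel C (zr A z) (idn A)"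
  using ab.ker_id[OF opab, of z A] Z by simp
end

context amp begin
lemma ker_id_amp: "\<alpha> (ker_obj C (idn A)) = 0"
proof -
  obtain z where Z: "is_zero_obj C z" using zero_obj_ex by blast
  show ?thesis using ker_obj_eq[OF ker_id[OF Z]] zero_obj_amp[OF Z] by simp
qed
lemma coker_id_amp: "\<alpha> (coker_obj C (idn A)) = 0"
proof -
  obtain z where Z: "is_zero_obj C z" using zero_obj_ex by blast
  show ?thesis using coker_obj_eq[OF coker_id[OF Z]] zero_obj_amp[OF Z] by simp
qed
end

locale costl = amp C \<alpha> for C :: "('o,'m) abcat" and \<alpha> +
  fixes f :: "ennreal \<Rightarrow> ennreal \<Rightarrow> ennreal \<Rightarrow> ennreal \<Rightarrow> ennreal"
  assumes cf: "cost_function f"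
begin

lemma f_mono: "x1 \<le> y1 \<Longrightarrow> x2 \<le> y2 \<Longrightarrow> x3 \<le> y3 \<Longrightarrow> x4 \<le> y4 \<Longrightarrow> f x1 x2 x3 x4 \<le> f y1 y2 y3 y4"
  using cf unfolding cost_function_def by blast
lemma f_sub: "f (x1 + y1) (x2 + y2) (x3 + y3) (x4 + y4) \<le> f x1 x2 x3 x4 + f y1 y2 y3 y4"
  using cf unfolding cost_function_def by blast
lemma f_zero: "f 0 0 0 0 = 0"
  using cf unfolding cost_function_def by blast
lemma f_swap: "f x1 x2 x3 x4 = f x3 x4 x1 x2"
  using cf unfolding cost_function_def by metis

lemma f_cost_sym: "f_cost C \<alpha> f \<phi> \<psi> = f_cost C \<alpha> f \<psi> \<phi>"
  unfolding f_cost_def using f_swap by metis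

lemma span_red: assumes "span_or_cospan C A B \<phi> \<psi>"
  shows "\<exists>\<phi>' \<psi>'. dm \<phi>' = dm \<psi>' \<and> cd \<phi>' = A \<and> cd \<psi>' = B \<and> f_cost C \<alpha> f \<phi>' \<psi>' \<le> f_cost C \<alpha> f \<phi> \<psi>"
proof (cases "dm \<phi> = dm \<psi> \<and> cd \<phi> = A \<and> cd \<psi> = B")
  case True thus ?thesis by blast
next
  case False
  hence c: "cd \<phi> = cd \<psi>" "dm \<phi> = A" "dm \<psi> = B" using assms unfolding span_or_cospan_def by auto
  obtain p1 p2 where P: "is_pb C \<phi> \<psi> p1 p2" using pb_ex[OF c(1)] by blast
  have P': "is_pb C \<psi> \<phi> p2 p1" using is_pb_sym[OF P] .
  have d: "dm p1 = dm p2" "cd p1 = A" "cd p2 = B" using P c unfolding is_pb_def by auto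
  have "f_cost C \<alpha> f p1 p2 \<le> f (\<alpha> (ker_obj C \<psi>)) (\<alpha> (coker_obj C \<psi>)) (\<alpha> (ker_obj C \<phi>)) (\<alpha> (coker_obj C \<phi>))"
    unfolding f_cost_def by (rule f_mono) (use pb_ker[OF P] pb_coker[OF P] pb_ker[OF P'] pb_coker[OF P'] in auto)
  also have "\<dots> = f_cost C \<alpha> f \<phi> \<psi>" unfolding f_cost_def by (rule f_swap)
  finally show ?thesis using d by blast
qed

lemma span_comp: assumes s1: "dm \<phi>1 = dm \<psi>1" "cd \<phi>1 = A" "cd \<psi>1 = B"
  and s2: "dm \<phi>2 = dm \<psi>2" "cd \<phi>2 = B" "cd \<psi>2 = D"
  shows "\<exists>\<phi> \<psi>. span_or_cospan C A D \<phi> \<psi> \<and> f_cost C \<alpha> f \<phi> \<psi> \<le> f_cost C \<alpha> f \<phi>1 \<psi>1 + f_cost C \<alpha> f \<phi>2 \<psi>2"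
proof -
  obtain p1 p2 where P: "is_pb C \<psi>1 \<phi>2 p1 p2" using pb_ex[of \<psi>1 \<phi>2] s1 s2 by auto
  have P': "is_pb C \<phi>2 \<psi>1 p2 p1" using is_pb_sym[OF P] .
  have d: "dm p1 = dm p2" "cd p1 = dm \<psi>1" "cd p2 = dm \<phi>2" using P unfolding is_pb_def by auto
  define \<phi> where "\<phi> = \<phi>1 \<cdot> p1"
  define \<psi> where "\<psi> = \<psi>2 \<cdot> p2"
  have soc: "span_or_cospan C A D \<phi> \<psi>" unfolding span_or_cospan_def \<phi>_def \<psi>_def using d s1 s2 by auto
  let ?k = "\<lambda>x. \<alpha> (ker_obj C x)" and ?c = "\<lambda>x. \<alpha> (coker_obj C x)"
  have 1: "?k \<phi> \<le> ?k \<phi>1 + ?k \<phi>2"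
  proof -
    have "?k \<phi> \<le> ?k p1 + ?k \<phi>1" unfolding \<phi>_def by (rule ker_comp) (use d s1 in auto)
    also have "\<dots> \<le> ?k \<phi>2 + ?k \<phi>1" using pb_ker[OF P] by (simp add: add_right_mono)
    finally show ?thesis by (simp add: add.commute)
  qed
  have 2: "?c \<phi> \<le> ?c \<phi>1 + ?c \<phi>2"
  proof -
    have "?c \<phi> \<le> ?c \<phi>1 + ?c p1" unfolding \<phi>_def by (rule coker_comp) (use d s1 in auto)
    also have "\<dots> \<le> ?c \<phi>1 + ?c \<phi>2" using pb_coker[OF P] by (simp add: add_left_mono)
    finally show ?thesis .
  qed
  have 3: "?k \<psi> \<le> ?k \<psi>1 + ?k \<psi>2"
  proof -
    have "?k \<psi> \<le> ?k p2 + ?k \<psi>2" unfolding \<psi>_def by (rule ker_comp) (use d s2 in auto)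
    also have "\<dots> \<le> ?k \<psi>1 + ?k \<psi>2" using pb_ker[OF P'] by (simp add: add_right_mono)
    finally show ?thesis .
  qed
  have 4: "?c \<psi> \<le> ?c \<psi>1 + ?c \<psi>2"
  proof -
    have "?c \<psi> \<le> ?c \<psi>2 + ?c p2" unfolding \<psi>_def by (rule coker_comp) (use d s2 in auto)
    also have "\<dots> \<le> ?c \<psi>2 + ?c \<psi>1" using pb_coker[OF P'] by (simp add: add_left_mono)
    finally show ?thesis by (simp add: add.commute)
  qed
  have "f_cost C \<alpha> f \<phi> \<psi> \<le> f (?k \<phi>1 + ?k \<phi>2) (?c \<phi>1 + ?c \<phi>2) (?k \<psi>1 + ?k \<psi>2) (?c \<psi>1 + ?c \<psi>2)"
    unfolding f_cost_def using 1 2 3 4 by (rule f_mono)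
  also have "\<dots> \<le> f_cost C \<alpha> f \<phi>1 \<psi>1 + f_cost C \<alpha> f \<phi>2 \<psi>2" unfolding f_cost_def by (rule f_sub)
  finally show ?thesis using soc by blast
qed

lemma main: "ext_pseudometric (dist_f C \<alpha> f)"
  unfolding ext_pseudometric_def
proof (intro conjI allI)
  fix A
  have "span_or_cospan C A A (idn A) (idn A)" unfolding span_or_cospan_def by simp
  hence "dist_f C \<alpha> f A A \<le> f_cost C \<alpha> f (idn A) (idn A)" unfolding dist_f_def
    by (auto intro!: Inf_lower)
  also have "\<dots> = 0" unfolding f_cost_def using ker_id_amp coker_id_amp f_zero by simp
  finally show "dist_f C \<alpha> f A A = 0" by simp
next
  fix A B
  have sub: "{f_cost C \<alpha> f \<phi> \<psi> | \<phi> \<psi>. span_or_cospan C X Y \<phi> \<psi>} \<subseteq> {f_cost C \<alpha> f \<phi> \<psi> | \<phi> \<psi>. span_or_cospan C Y X \<phi> \<psi>}"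
    for X Y
  proof
    fix z assume "z \<in> {f_cost C \<alpha> f \<phi> \<psi> | \<phi> \<psi>. span_or_cospan C X Y \<phi> \<psi>}"
    then obtain \<phi> \<psi> where h: "span_or_cospan C X Y \<phi> \<psi>" "z = f_cost C \<alpha> f \<phi> \<psi>" by blast
    have h1: "span_or_cospan C Y X \<psi> \<phi>" using h(1) unfolding span_or_cospan_def by auto
    have h2: "z = f_cost C \<alpha> f \<psi> \<phi>" using h(2) f_cost_sym by simp
    show "z \<in> {f_cost C \<alpha> f \<phi> \<psi> | \<phi> \<psi>. span_or_cospan C Y X \<phi> \<psi>}"
      unfolding mem_Collect_eq by (rule exI[of _ \<psi>], rule exI[of _ \<phi>]) (use h1 h2 in simp)
  qed
  have "{f_cost C \<alpha> f \<phi> \<psi> | \<phi> \<psi>. span_or_cospan C A B \<phi> \<psi>} = {f_cost C \<alpha> f \<phi> \<psi> | \<phi> \<psi>. span_or_cospan C B A \<phi> \<psi>}"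
    using sub[of A B] sub[of B A] by (rule antisym)
  thus "dist_f C \<alpha> f A B = dist_f C \<alpha> f B A" unfolding dist_f_def by simp
next
  fix A B D
  show "dist_f C \<alpha> f A D \<le> dist_f C \<alpha> f A B + dist_f C \<alpha> f B D" unfolding dist_f_def
  proof (rule ennreal_le_Inf_add)
    fix x y assume x: "x \<in> {f_cost C \<alpha> f \<phi> \<psi> | \<phi> \<psi>. span_or_cospan C A B \<phi> \<psi>}"
      and y: "y \<in> {f_cost C \<alpha> f \<phi> \<psi> | \<phi> \<psi>. span_or_cospan C B D \<phi> \<psi>}"
    obtain \<phi>1 \<psi>1 where 1: "span_or_cospan C A B \<phi>1 \<psi>1" "x = f_cost C \<alpha> f \<phi>1 \<psi>1" using x by blast
    obtain \<phi>2 \<psi>2 where 2: "span_or_cospan C B D \<phi>2 \<psi>2" "y = f_cost C \<alpha> f \<phi>2 \<psi>2" using y by blast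
    obtain a1 b1 where r1: "dm a1 = dm b1" "cd a1 = A" "cd b1 = B" "f_cost C \<alpha> f a1 b1 \<le> x"
      using span_red[OF 1(1)] 1(2) by blast
    obtain a2 b2 where r2: "dm a2 = dm b2" "cd a2 = B" "cd b2 = D" "f_cost C \<alpha> f a2 b2 \<le> y"
      using span_red[OF 2(1)] 2(2) by blast
    obtain \<phi> \<psi> where c: "span_or_cospan C A D \<phi> \<psi>" "f_cost C \<alpha> f \<phi> \<psi> \<le> f_cost C \<alpha> f a1 b1 + f_cost C \<alpha> f a2 b2"
      using span_comp[OF r1(1-3) r2(1-3)] by blast
    have "Inf {f_cost C \<alpha> f \<phi> \<psi> | \<phi> \<psi>. span_or_cospan C A D \<phi> \<psi>} \<le> f_cost C \<alpha> f \<phi> \<psi>"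
      using c(1) by (auto intro!: Inf_lower)
    also have "\<dots> \<le> x + y" using c(2) r1(4) r2(4) by (meson add_mono order_trans)
    finally show "Inf {f_cost C \<alpha> f \<phi> \<psi> | \<phi> \<psi>. span_or_cospan C A D \<phi> \<psi>} \<le> x + y" .
  qed
qed

end

theorem mainTheorem4:
  fixes C :: "('o, 'm) abcat" and \<alpha> :: "'o \<Rightarrow> ennreal"
    and f :: "ennreal \<Rightarrow> ennreal \<Rightarrow> ennreal \<Rightarrow> ennreal \<Rightarrow> ennreal"
  assumes "abelian_category C" and "amplitude C \<alpha>" and "cost_function f"
  shows "ext_pseudometric (dist_f C \<alpha> f)"
proof -
  interpret costl C \<alpha> f
    using assms unfolding costl_def costl_axioms_def amp_def amp_axioms_def ab_def by blast
  show ?thesis by (rule main)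
qed

end
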